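(* Let $\mathcal{K}=\mathbb{F}_q((t))$, $\mathcal{O}=\mathbb{F}_q[[t]]$, $G=PGL(2,\mathcal{K})$, and fix an integer $k\ge 1$. Let $I^0=\left\{\begin{pmatrix}1+ta & b\\ tc & 1+td\end{pmatrix} : a,b,c,d\in\mathcal{O}\right\}$, let $A\subset G$ be the subgroup generated by $I^0$ and $\sigma=\begin{pmatrix}0&1\\ t&0\end{pmatrix}$, let $\psi:\mathbb{F}_q\to\mathbb{C}^\times$ be a nontrivial additive character and let $\chi:A\to\mathbb{C}^\times$ be the character given on $I^0$ by $\chi\left(\begin{pmatrix}1+ta & b\\ tc & 1+td\end{pmatrix}\right)=\psi(b_0+c_0)$ and with $\chi(\sigma)=1$. Let the group $1+t^k\mathcal{O}$ act on $G$ on the left by $g\mapsto\begin{pmatrix}z&0\\0&1\end{pmatrix}g$, and $A$ act on the right by multiplication. Call a $(1+t^k\mathcal{O})\times A$-orbit in $G$ relevant if it supports a nonzero function $f$ with $f\left(\begin{pmatrix}z&0\\0&1\end{pmatrix}g\,a\right)=\chi(a)f(g)$ for all $z\in 1+t^k\mathcal{O}$, $a\in A$. For each $n\in\mathbb{Z}$ let $R_{n,k}$ be the set of matrices $$\begin{pmatrix}a_nt^n & b_{n-k+1}t^{n-k+1}+\dots+b_{n-1}t^{n-1}\\ 0&1\end{pmatrix},\qquad a_n\in\mathbb{F}_q^\times,\ b_i\in\mathbb{F}_q,$$ and let $R=\bigcup_{n\in\mathbb{Z}}R_{n,k}$. Then $R$ contains exactly one representative of every relevant $(1+t^k\mathcal{O})\times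 A$-orbit in $G$.
   Context: For $x\in\mathcal{O}$, $x_i$ denotes the coefficient of $t^i$ in $x$. *)

theory Defs
  imports Complex_Main "HOL-Computational_Algebra.Formal_Laurent_Series"
    "HOL-Algebra.Generated_Groups"
begin

text \<open>2x2 matrices over a commutative ring, stored row-major as (a, b, c, d)
  for the matrix with rows (a b) and (c d).\<close>
type_synonym 'a mat2 = "'a \<times> 'a \<times> 'a \<times> 'a"

definition m2mul :: "'a::comm_ring_1 mat2 \<Rightarrow> 'a mat2 \<Rightarrow> 'a mat2" where
  "m2mul M N = (case M of (a, b, c, d) \<Rightarrow> case N of (e, f, g, h) \<Rightarrow>
      (a*e + b*g, a*f + b*h, c*e + d*g, c*f + d*h))"

definition m2det :: "'a::comm_ring_1 mat2 \<Rightarrow> 'a" where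
  "m2det M = (case M of (a, b, c, d) \<Rightarrow> a*d - b*c)"

definition m2smult :: "'a::comm_ring_1 \<Rightarrow> 'a mat2 \<Rightarrow> 'a mat2" where
  "m2smult s M = (case M of (a, b, c, d) \<Rightarrow> (s*a, s*b, s*c, s*d))"

text \<open>The class of a matrix in PGL(2): all its nonzero scalar multiples.\<close>
definition pcls :: "'a::field mat2 \<Rightarrow> 'a mat2 set" where
  "pcls M = {m2smult s M | s. s \<noteq> 0}"

definition PGL2 :: "'a::field mat2 set monoid" where
  "PGL2 = \<lparr> carrier = {pcls M | M. m2det M \<noteq> 0},
            mult = (\<lambda>X Y. {m2mul x y | x y. x \<in> X \<and> y \<in> Y}),
            one = pcls (1, 0, 0, 1) \<rparr>"

text \<open>Laurent series: K = F((t)), O = F[[t]] inside K, t = fls_X.\<close>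
definition Ocal :: "'a::field fls set" where
  "Ocal = {x. \<forall>n<0. fls_nth x n = 0}"

definition Ucal :: "nat \<Rightarrow> 'a::field fls set" where
  "Ucal k = {1 + fls_X ^ k * y | y. y \<in> Ocal}"

definition I0 :: "'a::field fls mat2 set set" where
  "I0 = {pcls (1 + fls_X * a, b, fls_X * c, 1 + fls_X * d) | a b c d.
          a \<in> Ocal \<and> b \<in> Ocal \<and> c \<in> Ocal \<and> d \<in> Ocal}"

definition sigma :: "'a::field fls mat2 set" where
  "sigma = pcls (0, 1, fls_X, 0)"

definition Agrp :: "'a::field fls mat2 set set" where
  "Agrp = generate PGL2 (insert sigma I0)"

definition dg :: "'a::field fls \<Rightarrow> 'a fls mat2 set" where
  "dg z = pcls (z, 0, 0, 1)"

definition orbitk :: "nat \<Rightarrow> 'a::field fls mat2 set \<Rightarrow> 'a fls mat2 set set" where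
  "orbitk k g = {dg z \<otimes>\<^bsub>PGL2\<^esub> g \<otimes>\<^bsub>PGL2\<^esub> a | z a. z \<in> Ucal k \<and> a \<in> Agrp}"

definition relevant ::
  "nat \<Rightarrow> ('a::field fls mat2 set \<Rightarrow> complex) \<Rightarrow> 'a fls mat2 set set \<Rightarrow> bool" where
  "relevant k chi Orb \<longleftrightarrow>
     (\<exists>g \<in> carrier PGL2. Orb = orbitk k g) \<and>
     (\<exists>f :: 'a fls mat2 set \<Rightarrow> complex.
        (\<exists>x \<in> Orb. f x \<noteq> 0) \<and> (\<forall>x. x \<notin> Orb \<longrightarrow> f x = 0) \<and>
        (\<forall>z \<in> Ucal k. \<forall>a \<in> Agrp. \<forall>x \<in> Orb.
            f (dg z \<otimes>\<^bsub>PGL2\<^esub> x \<otimes>\<^bsub>PGL2\<^esub> a) = chi a * f x))"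

definition Rnk :: "int \<Rightarrow> nat \<Rightarrow> 'a::field fls mat2 set set" where
  "Rnk n k = {pcls (fls_const a * fls_X_intpow n, \<beta>, 0, 1) | a \<beta>.
      a \<noteq> 0 \<and> (\<forall>i. fls_nth \<beta> i \<noteq> 0 \<longrightarrow> n - int k + 1 \<le> i \<and> i \<le> n - 1)}"

definition Rset :: "nat \<Rightarrow> 'a::field fls mat2 set set" where
  "Rset k = (\<Union>n. Rnk n k)"

end

theory Submission
  imports Defs
begin

unbundle fps_syntax



lemma Ocal_iff: "x \<in> Ocal \<longleftrightarrow> (\<forall>n<0. x $$ n = 0)" by (simp add: Ocal_def)

lemma Ocal_subdeg: "x \<in> Ocal \<longleftrightarrow> fls_subdegree x \<ge> 0"
proof
  assume "x \<in> Ocal"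
  then show "fls_subdegree x \<ge> 0"
    by (cases "x = 0") (auto simp: Ocal_iff, metis nth_fls_subdegree_nonzero not_le)
next
  assume "fls_subdegree x \<ge> 0" then show "x \<in> Ocal" by (simp add: Ocal_iff)
qed

lemma Ocal_0[simp]: "0 \<in> Ocal" and Ocal_1[simp]: "1 \<in> Ocal"
  and Ocal_const[simp]: "fls_const c \<in> Ocal" and Ocal_X[simp]: "fls_X \<in> Ocal"
  and Ocal_Xp[simp]: "fls_X ^ m \<in> Ocal"
  by (auto simp: Ocal_iff)

lemma Ocal_add[simp]: "x \<in> Ocal \<Longrightarrow> y \<in> Ocal \<Longrightarrow> x + y \<in> Ocal"
  and Ocal_diff[simp]: "x \<in> Ocal \<Longrightarrow> y \<in> Ocal \<Longrightarrow> x - y \<in> Ocal"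
  and Ocal_uminus[simp]: "x \<in> Ocal \<Longrightarrow> - x \<in> Ocal"
  by (auto simp: Ocal_iff)

lemma Ocal_mult[simp]: "x \<in> Ocal \<Longrightarrow> y \<in> Ocal \<Longrightarrow> (x * y :: 'a::field fls) \<in> Ocal"
  by (simp add: Ocal_subdeg fls_mult_subdegree_ge_0)

lemma Ocal_intpow[simp]: "i \<ge> 0 \<Longrightarrow> fls_X_intpow i \<in> Ocal"
  by (simp add: Ocal_iff)

lemma Ocal_inverse: "x \<in> Ocal \<Longrightarrow> x $$ 0 \<noteq> 0 \<Longrightarrow> inverse (x :: 'a::field fls) \<in> Ocal"
proof -
  assume "x \<in> Ocal" "x $$ 0 \<noteq> 0"
  then have "fls_subdegree x = 0"
    by (meson Ocal_subdeg fls_subdegree_leI order_antisym)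
  then show ?thesis by (simp add: Ocal_subdeg)
qed

lemma X_times_nth: "(fls_X * (x::'a::field fls)) $$ n = x $$ (n - 1)"
  by (simp add: fls_X_times_conv_shift(1))

lemma intpow_times_nth: "(fls_X_intpow i * (x :: 'a::field fls)) $$ n = x $$ (n - i)"
  by (simp add: fls_X_intpow_times_conv_shift)

lemma U1_nth0: "a \<in> Ocal \<Longrightarrow> (1 + fls_X * a) $$ 0 = 1"
  by (simp add: X_times_nth Ocal_iff)

lemma U1_nz: "a \<in> Ocal \<Longrightarrow> 1 + fls_X * (a :: 'a::field fls) \<noteq> 0"
  by (metis U1_nth0 fls_zero_nth zero_neq_one)

lemma U1_char: "u \<in> Ocal \<Longrightarrow> u $$ 0 = 1 \<Longrightarrow> \<exists>a\<in>Ocal. u = 1 + fls_X * (a :: 'a::field fls)"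
proof -
  assume u: "u \<in> Ocal" "u $$ 0 = 1"
  let ?a = "fls_shift 1 (u - 1)"
  have "?a \<in> Ocal" using u by (auto simp: Ocal_iff)
  moreover have "u = 1 + fls_X * ?a"
    by (rule fls_eqI) (use u in \<open>auto simp: X_times_nth\<close>)
  ultimately show ?thesis by blast
qed



lemma m2mul_assoc: "m2mul (m2mul A B) C = m2mul A (m2mul B C)"
  by (cases A; cases B; cases C) (simp add: m2mul_def algebra_simps)

lemma m2det_mul: "m2det (m2mul A B) = m2det A * m2det B"
  by (cases A; cases B) (simp add: m2mul_def m2det_def algebra_simps)

lemma m2mul_smult: "m2mul (m2smult s A) (m2smult r B) = m2smult (s*r) (m2mul A B)"
  by (cases A; cases B) (simp add: m2mul_def m2smult_def algebra_simps)

lemma m2smult_smult: "m2smult s (m2smult r A) = m2smult (s*r) A"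
  by (cases A) (simp add: m2smult_def algebra_simps)

lemma m2smult_1[simp]: "m2smult 1 A = A"
  by (cases A) (simp add: m2smult_def)

lemma m2mul_1[simp]: "m2mul (1,0,0,1) A = A" "m2mul A (1,0,0,1) = A"
  by (cases A; simp add: m2mul_def)+

lemma pcls_self: "M \<in> pcls (M :: 'a::field mat2)"
  unfolding pcls_def by (rule CollectI, rule exI[of _ 1]) simp

lemma pcls_smult: assumes s: "s \<noteq> 0" shows "pcls (m2smult s M) = pcls (M :: 'a::field mat2)"
proof (rule Set.set_eqI)
  fix x
  show "x \<in> pcls (m2smult s M) \<longleftrightarrow> x \<in> pcls M"
  proof
    assume "x \<in> pcls (m2smult s M)"
    then obtain r where "r \<noteq> 0" "x = m2smult r (m2smult s M)" unfolding pcls_def by blast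
    then show "x \<in> pcls M" unfolding pcls_def using s by (auto simp: m2smult_smult)
  next
    assume "x \<in> pcls M"
    then obtain r where r: "r \<noteq> 0" "x = m2smult r M" unfolding pcls_def by blast
    then have "x = m2smult (r/s) (m2smult s M)" using s by (simp add: m2smult_smult)
    then show "x \<in> pcls (m2smult s M)" unfolding pcls_def using s r by auto
  qed
qed

lemma pcls_eqD: "pcls M = pcls N \<Longrightarrow> \<exists>s. s \<noteq> 0 \<and> N = m2smult s (M :: 'a::field mat2)"
proof -
  assume "pcls M = pcls N"
  then have "N \<in> pcls M" using pcls_self[of N] by simp
  then show ?thesis unfolding pcls_def by blast
qed

lemma PGL_mult_eq: "X \<otimes>\<^bsub>PGL2\<^esub> Y = {m2mul x y | x y. x \<in> X \<and> y \<in> (Y :: 'a::field mat2 set)}"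
  by (simp add: PGL2_def)

lemma PGL_mult: "pcls M \<otimes>\<^bsub>PGL2\<^esub> pcls N = pcls (m2mul M N :: 'a::field mat2)"
proof (rule Set.set_eqI)
  fix z
  show "z \<in> pcls M \<otimes>\<^bsub>PGL2\<^esub> pcls N \<longleftrightarrow> z \<in> pcls (m2mul M N)"
  proof
    assume "z \<in> pcls M \<otimes>\<^bsub>PGL2\<^esub> pcls N"
    then obtain x y where "z = m2mul x y" "x \<in> pcls M" "y \<in> pcls N" unfolding PGL_mult_eq by blast
    then obtain r s where "r \<noteq> 0" "s \<noteq> 0" "z = m2mul (m2smult r M) (m2smult s N)"
      unfolding pcls_def by blast
    then show "z \<in> pcls (m2mul M N)" unfolding pcls_def by (auto simp: m2mul_smult)
  next
    assume "z \<in> pcls (m2mul M N)"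
    then obtain r where r: "r \<noteq> 0" "z = m2smult r (m2mul M N)" unfolding pcls_def by blast
    then have "z = m2mul (m2smult r M) (m2smult 1 N)" using m2mul_smult[of r M 1 N] by simp
    moreover have "m2smult r M \<in> pcls M" "m2smult 1 N \<in> pcls N" using r pcls_self[of N] unfolding pcls_def by auto
    ultimately show "z \<in> pcls M \<otimes>\<^bsub>PGL2\<^esub> pcls N" unfolding PGL_mult_eq by blast
  qed
qed

lemma PGL_one: "\<one>\<^bsub>PGL2\<^esub> = pcls (1,0,0,1)"
  by (simp add: PGL2_def)

lemma PGL_carrier: "x \<in> carrier PGL2 \<longleftrightarrow> (\<exists>M. x = pcls M \<and> m2det (M :: 'a::field mat2) \<noteq> 0)"
  by (auto simp: PGL2_def)

lemma pcls_carrier: "m2det M \<noteq> 0 \<Longrightarrow> pcls (M :: 'a::field mat2) \<in> carrier PGL2"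
  unfolding PGL_carrier by blast

definition adj2 :: "'a::comm_ring_1 mat2 \<Rightarrow> 'a mat2" where
  "adj2 M = (case M of (a,b,c,d) \<Rightarrow> (d, -b, -c, a))"

lemma adj2_mul: "m2mul (adj2 M) M = m2smult (m2det M) (1,0,0,1)"
  by (cases M) (simp add: adj2_def m2mul_def m2det_def m2smult_def algebra_simps)

lemma adj2_det: "m2det (adj2 M) = m2det M"
  by (cases M) (simp add: adj2_def m2det_def algebra_simps)

lemma PGL_group: "group (PGL2 :: 'a::field mat2 set monoid)"
proof (rule groupI)
  fix x y :: "'a mat2 set"
  assume "x \<in> carrier PGL2" "y \<in> carrier PGL2"
  then obtain M N where "x = pcls M" "m2det M \<noteq> 0" "y = pcls N" "m2det N \<noteq> 0"
    unfolding PGL_carrier by blast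
  then show "x \<otimes>\<^bsub>PGL2\<^esub> y \<in> carrier PGL2"
    by (simp add: PGL_mult m2det_mul pcls_carrier)
next
  show "\<one>\<^bsub>PGL2\<^esub> \<in> carrier (PGL2 :: 'a mat2 set monoid)"
    by (simp add: PGL_one pcls_carrier m2det_def)
next
  fix x y z :: "'a mat2 set"
  assume "x \<in> carrier PGL2" "y \<in> carrier PGL2" "z \<in> carrier PGL2"
  then obtain M N P where "x = pcls M" "y = pcls N" "z = pcls P"
    unfolding PGL_carrier by blast
  then show "x \<otimes>\<^bsub>PGL2\<^esub> y \<otimes>\<^bsub>PGL2\<^esub> z = x \<otimes>\<^bsub>PGL2\<^esub> (y \<otimes>\<^bsub>PGL2\<^esub> z)"
    by (simp add: PGL_mult m2mul_assoc)
next
  fix x :: "'a mat2 set"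
  assume "x \<in> carrier PGL2"
  then obtain M where "x = pcls M" unfolding PGL_carrier by blast
  then show "\<one>\<^bsub>PGL2\<^esub> \<otimes>\<^bsub>PGL2\<^esub> x = x"
    by (simp add: PGL_mult PGL_one)
next
  fix x :: "'a mat2 set"
  assume "x \<in> carrier PGL2"
  then obtain M where M: "x = pcls M" "m2det M \<noteq> 0" unfolding PGL_carrier by blast
  have "pcls (adj2 M) \<otimes>\<^bsub>PGL2\<^esub> x = \<one>\<^bsub>PGL2\<^esub>"
    using M by (simp add: PGL_mult adj2_mul pcls_smult PGL_one)
  moreover have "pcls (adj2 M) \<in> carrier PGL2" using M by (simp add: pcls_carrier adj2_det)
  ultimately show "\<exists>y\<in>carrier PGL2. y \<otimes>\<^bsub>PGL2\<^esub> x = \<one>\<^bsub>PGL2\<^esub>" by blast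
qed

interpretation G: group "PGL2 :: 'a::field mat2 set monoid"
  by (rule PGL_group)

lemma PGL_inv: "m2det M \<noteq> 0 \<Longrightarrow> inv\<^bsub>PGL2\<^esub> (pcls M) = pcls (adj2 (M :: 'a::field mat2))"
  by (rule G.inv_equality) (simp_all add: PGL_mult adj2_mul pcls_smult PGL_one pcls_carrier adj2_det)



definition I0f :: "'a::field fls \<Rightarrow> 'a fls \<Rightarrow> 'a fls \<Rightarrow> 'a fls \<Rightarrow> 'a fls mat2" where
  "I0f a b c d = (1 + fls_X * a, b, fls_X * c, 1 + fls_X * d)"
definition Sf :: "'a::field fls \<Rightarrow> 'a fls \<Rightarrow> 'a fls \<Rightarrow> 'a fls \<Rightarrow> 'a fls mat2" where
  "Sf a b c d = (fls_X * c, 1 + fls_X * d, fls_X * (1 + fls_X * a), fls_X * b)"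

definition inI0 :: "'a::field fls mat2 \<Rightarrow> bool" where
  "inI0 M \<longleftrightarrow> (\<exists>a\<in>Ocal. \<exists>b\<in>Ocal. \<exists>c\<in>Ocal. \<exists>d\<in>Ocal. M = I0f a b c d)"
definition inSf :: "'a::field fls mat2 \<Rightarrow> bool" where
  "inSf M \<longleftrightarrow> (\<exists>a\<in>Ocal. \<exists>b\<in>Ocal. \<exists>c\<in>Ocal. \<exists>d\<in>Ocal. M = Sf a b c d)"

definition Sset :: "'a::field fls mat2 set set" where
  "Sset = {pcls M | M. inI0 M \<or> inSf M}"

lemma det_I0f: "m2det (I0f a b c d) = 1 + fls_X * (a + d + fls_X * a * d - b * c)"
  by (simp add: I0f_def m2det_def algebra_simps)

lemma det_Sf: "m2det (Sf a b c d) = - fls_X * (1 + fls_X * (a + d + fls_X * a * d - b * c))"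
  by (simp add: Sf_def m2det_def algebra_simps)

lemma inI0_det: "inI0 M \<Longrightarrow> m2det M \<noteq> 0"
  unfolding inI0_def
proof (elim bexE)
  fix a b c d assume "a \<in> Ocal" "b \<in> Ocal" "c \<in> Ocal" "d \<in> Ocal" "M = I0f a b c d"
  then show "m2det M \<noteq> 0" unfolding \<open>M = _\<close> det_I0f by (intro U1_nz) simp
qed

lemma inSf_det: "inSf M \<Longrightarrow> m2det M \<noteq> 0"
  unfolding inSf_def
proof (elim bexE)
  fix a b c d assume "a \<in> Ocal" "b \<in> Ocal" "c \<in> Ocal" "d \<in> Ocal" "M = Sf a b c d"
  then have "1 + fls_X * (a + d + fls_X * a * d - b * c) \<noteq> 0" by (intro U1_nz) simp
  then show "m2det M \<noteq> 0" unfolding det_Sf \<open>M = _\<close> by simp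
qed

lemma mul_I0_I0: "m2mul (I0f a b c d) (I0f a' b' c' d') =
   I0f (a + a' + fls_X * a * a' + b * c') ((1 + fls_X * a) * b' + b * (1 + fls_X * d'))
       (c * (1 + fls_X * a') + (1 + fls_X * d) * c') (c * b' + d + d' + fls_X * d * d')"
  unfolding I0f_def m2mul_def prod.case prod.inject
  by (intro conjI) (simp_all add: algebra_simps)

lemma mul_I0_Sf: "m2mul (I0f a b c d) (Sf a' b' c' d') =
   Sf (c * c' + d + a' + fls_X * d * a') (c * (1 + fls_X * d') + (1 + fls_X * d) * b')
      (c' * (1 + fls_X * a) + b * (1 + fls_X * a')) (a + d' + fls_X * a * d' + b * b')"
  unfolding I0f_def Sf_def m2mul_def prod.case prod.inject
  by (intro conjI) (simp_all add: algebra_simps)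

lemma mul_Sf_I0: "m2mul (Sf a b c d) (I0f a' b' c' d') =
   Sf (a + a' + fls_X * a * a' + b * c') ((1 + fls_X * a) * b' + b * (1 + fls_X * d'))
      (c * (1 + fls_X * a') + (1 + fls_X * d) * c') (c * b' + d + d' + fls_X * d * d')"
  unfolding I0f_def Sf_def m2mul_def prod.case prod.inject
  by (intro conjI) (simp_all add: algebra_simps)

lemma mul_Sf_Sf: "m2mul (Sf a b c d) (Sf a' b' c' d') = m2smult fls_X
   (I0f (c * c' + d + a' + fls_X * d * a') (c * (1 + fls_X * d') + (1 + fls_X * d) * b')
      ((1 + fls_X * a) * c' + b * (1 + fls_X * a')) (a + d' + fls_X * a * d' + b * b'))"
  unfolding I0f_def Sf_def m2mul_def m2smult_def prod.case prod.inject
  by (intro conjI) (simp_all add: algebra_simps)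

lemma inI0_E: assumes "inI0 M" obtains a b c d where "a \<in> Ocal" "b \<in> Ocal" "c \<in> Ocal" "d \<in> Ocal" "M = I0f a b c d"
  using assms unfolding inI0_def by blast
lemma inSf_E: assumes "inSf M" obtains a b c d where "a \<in> Ocal" "b \<in> Ocal" "c \<in> Ocal" "d \<in> Ocal" "M = Sf a b c d"
  using assms unfolding inSf_def by blast

lemma inI0_intro: "a \<in> Ocal \<Longrightarrow> b \<in> Ocal \<Longrightarrow> c \<in> Ocal \<Longrightarrow> d \<in> Ocal \<Longrightarrow> inI0 (I0f a b c d)"
  unfolding inI0_def by blast
lemma inSf_intro: "a \<in> Ocal \<Longrightarrow> b \<in> Ocal \<Longrightarrow> c \<in> Ocal \<Longrightarrow> d \<in> Ocal \<Longrightarrow> inSf (Sf a b c d)"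
  unfolding inSf_def by blast

lemma inI0_I0: assumes "inI0 M" "inI0 N" shows "inI0 (m2mul M N)"
proof -
  obtain a b c d where h1: "a \<in> Ocal" "b \<in> Ocal" "c \<in> Ocal" "d \<in> Ocal" "M = I0f a b c d" using assms(1) by (rule inI0_E)
  obtain a' b' c' d' where h2: "a' \<in> Ocal" "b' \<in> Ocal" "c' \<in> Ocal" "d' \<in> Ocal" "N = I0f a' b' c' d'" using assms(2) by (rule inI0_E)
  show ?thesis unfolding h1(5) h2(5) mul_I0_I0 apply (rule inI0_intro) using h1 h2 by simp_all
qed

lemma inI0_Sf: assumes "inI0 M" "inSf N" shows "inSf (m2mul M N)"
proof -
  obtain a b c d where h1: "a \<in> Ocal" "b \<in> Ocal" "c \<in> Ocal" "d \<in> Ocal" "M = I0f a b c d" using assms(1) by (rule inI0_E)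
  obtain a' b' c' d' where h2: "a' \<in> Ocal" "b' \<in> Ocal" "c' \<in> Ocal" "d' \<in> Ocal" "N = Sf a' b' c' d'" using assms(2) by (rule inSf_E)
  show ?thesis unfolding h1(5) h2(5) mul_I0_Sf apply (rule inSf_intro) using h1 h2 by simp_all
qed

lemma inSf_I0: assumes "inSf M" "inI0 N" shows "inSf (m2mul M N)"
proof -
  obtain a b c d where h1: "a \<in> Ocal" "b \<in> Ocal" "c \<in> Ocal" "d \<in> Ocal" "M = Sf a b c d" using assms(1) by (rule inSf_E)
  obtain a' b' c' d' where h2: "a' \<in> Ocal" "b' \<in> Ocal" "c' \<in> Ocal" "d' \<in> Ocal" "N = I0f a' b' c' d'" using assms(2) by (rule inI0_E)
  show ?thesis unfolding h1(5) h2(5) mul_Sf_I0 apply (rule inSf_intro) using h1 h2 by simp_all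
qed

lemma inSf_Sf: assumes "inSf M" "inSf N" shows "\<exists>P. inI0 P \<and> m2mul M N = m2smult fls_X P"
proof -
  obtain a b c d where h1: "a \<in> Ocal" "b \<in> Ocal" "c \<in> Ocal" "d \<in> Ocal" "M = Sf a b c d" using assms(1) by (rule inSf_E)
  obtain a' b' c' d' where h2: "a' \<in> Ocal" "b' \<in> Ocal" "c' \<in> Ocal" "d' \<in> Ocal" "N = Sf a' b' c' d'" using assms(2) by (rule inSf_E)
  show ?thesis unfolding h1(5) h2(5) mul_Sf_Sf apply (rule exI, rule conjI[OF _ refl], rule inI0_intro) using h1 h2 by simp_all
qed

lemma Sset_mult: assumes "x \<in> Sset" "y \<in> Sset" shows "x \<otimes>\<^bsub>PGL2\<^esub> y \<in> Sset"
proof -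
  obtain M N where x: "x = pcls M" "inI0 M \<or> inSf M" and y: "y = pcls N" "inI0 N \<or> inSf N"
    using assms unfolding Sset_def by blast
  have "\<exists>P. (inI0 P \<or> inSf P) \<and> pcls (m2mul M N) = pcls P"
    using x(2) y(2)
  proof (elim disjE)
    assume "inSf M" "inSf N"
    then obtain P where "inI0 P" "m2mul M N = m2smult fls_X P" using inSf_Sf by blast
    then have "pcls (m2mul M N) = pcls P" using pcls_smult[of fls_X P] by simp
    then show ?thesis using \<open>inI0 P\<close> by blast
  qed (use inI0_I0 inI0_Sf inSf_I0 in blast)+
  then show ?thesis
    unfolding x y PGL_mult Sset_def by blast
qed

lemma mult_nth0: assumes "x \<in> Ocal" "y \<in> Ocal" shows "(x * y :: 'a::field fls) $$ 0 = x $$ 0 * y $$ 0"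
proof -
  have "x = fps_to_fls (fls_regpart x)" "y = fps_to_fls (fls_regpart y)"
    using assms by (simp_all add: Ocal_subdeg)
  then have "x * y = fps_to_fls (fls_regpart x * fls_regpart y)" by (metis fls_times_fps_to_fls)
  then show ?thesis by simp
qed

lemma inv_U1: assumes "u \<in> Ocal" "u $$ 0 = 1"
  shows "inverse (u :: 'a::field fls) \<in> Ocal" "inverse u $$ 0 = 1"
proof -
  show i: "inverse u \<in> Ocal" by (rule Ocal_inverse) (simp_all add: assms)
  have "u \<noteq> 0" using assms by auto
  then have "inverse u * u = 1" by simp
  then have "(inverse u * u) $$ 0 = 1" by simp
  then show "inverse u $$ 0 = 1" using mult_nth0[OF i assms(1)] assms(2) by simp
qed

lemma I0_eq: "I0 = {pcls M | M. inI0 M}"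
  unfolding I0_def inI0_def I0f_def by blast

lemma sigma_eq: "sigma = pcls (Sf 0 0 0 0)"
  by (simp add: sigma_def Sf_def)

lemma adj_I0f: "adj2 (I0f a b c d) = I0f d (-b) (-c) a"
  by (simp add: adj2_def I0f_def)

lemma inv_sigma: "inv\<^bsub>PGL2\<^esub> sigma = (sigma :: 'a::field fls mat2 set)"
proof -
  have "inv\<^bsub>PGL2\<^esub> sigma = pcls (adj2 (Sf 0 0 0 (0::'a fls)))"
    unfolding sigma_eq by (rule PGL_inv) (simp add: Sf_def m2det_def)
  also have "adj2 (Sf 0 0 0 (0::'a fls)) = m2smult (-1) (Sf 0 0 0 0)"
    by (simp add: adj2_def Sf_def m2smult_def)
  also have "pcls \<dots> = pcls (Sf 0 0 0 0)" by (rule pcls_smult) simp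
  finally show ?thesis unfolding sigma_eq .
qed

lemma sigma_Sset: "sigma \<in> Sset"
proof -
  have "inSf (Sf 0 0 0 0)" by (rule inSf_intro) simp_all
  then show ?thesis unfolding Sset_def sigma_eq by blast
qed

lemma Agrp_sub_Sset: "Agrp \<subseteq> Sset"
proof
  fix x assume "x \<in> Agrp"
  then show "x \<in> Sset" unfolding Agrp_def
  proof (induct rule: generate.induct)
    case one
    have "inI0 (I0f 0 0 0 0)" by (rule inI0_intro) simp_all
    moreover have "I0f 0 0 0 0 = (1,0,0,1)" by (simp add: I0f_def)
    ultimately show ?case unfolding Sset_def PGL_one by (metis (mono_tags, lifting) mem_Collect_eq)
  next
    case (incl h)
    then show ?case
    proof
      assume "h = sigma"
      moreover have "inSf (Sf 0 0 0 0)" by (rule inSf_intro) simp_all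
      ultimately show ?case unfolding Sset_def sigma_eq by blast
    next
      assume "h \<in> I0" then show ?case unfolding Sset_def I0_eq by blast
    qed
  next
    case (inv h)
    then show ?case
    proof
      assume h: "h = sigma"
      show ?case unfolding h inv_sigma using sigma_Sset .
    next
      assume "h \<in> I0"
      then obtain M where M: "h = pcls M" "inI0 M" unfolding I0_eq by blast
      obtain a b c d where h1: "a \<in> Ocal" "b \<in> Ocal" "c \<in> Ocal" "d \<in> Ocal" "M = I0f a b c d"
        using M(2) by (rule inI0_E)
      have "inv\<^bsub>PGL2\<^esub> h = pcls (adj2 M)" unfolding M(1) by (rule PGL_inv) (rule inI0_det[OF M(2)])
      moreover have "inI0 (adj2 M)" unfolding h1(5) adj_I0f by (rule inI0_intro) (simp_all add: h1)
      ultimately show ?case unfolding Sset_def by blast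
    qed
  next
    case (eng h1 h2)
    then show ?case using Sset_mult by blast
  qed
qed

lemma gens_carrier: "insert sigma I0 \<subseteq> carrier (PGL2 :: 'a::field fls mat2 set monoid)"
proof
  fix x :: "'a fls mat2 set" assume "x \<in> insert sigma I0"
  then show "x \<in> carrier PGL2"
  proof
    assume "x = sigma" then show ?thesis unfolding sigma_eq
      by (rule ssubst, intro pcls_carrier inSf_det inSf_intro) simp_all
  next
    assume "x \<in> I0"
    then obtain M where M: "x = pcls M" "inI0 M" unfolding I0_eq by blast
    then show ?thesis using pcls_carrier inI0_det by blast
  qed
qed

lemma Agrp_subgroup: "subgroup Agrp (PGL2 :: 'a::field fls mat2 set monoid)"
  unfolding Agrp_def by (rule G.generate_is_subgroup[OF gens_carrier])

lemma Agrp_upper: assumes "x \<in> Agrp" "x = pcls (p, q, 0, 1)"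
  shows "p \<in> Ocal" "p $$ 0 = 1" "q \<in> Ocal"
proof -
  obtain M where M: "x = pcls M" "inI0 M \<or> inSf M" using Agrp_sub_Sset assms(1) unfolding Sset_def by blast
  obtain s where s: "s \<noteq> 0" "(p, q, 0, 1) = m2smult s M" using pcls_eqD M(1) assms(2) by metis
  have "\<not> inSf M"
  proof
    assume "inSf M"
    then obtain a b c d where h1: "a \<in> Ocal" "b \<in> Ocal" "c \<in> Ocal" "d \<in> Ocal" "M = Sf a b c d"
      by (rule inSf_E)
    then have "s * (fls_X * (1 + fls_X * a)) = 0" using s(2) by (simp add: Sf_def m2smult_def)
    then show False using s(1) U1_nz[OF h1(1)] by simp
  qed
  then have "inI0 M" using M by blast
  then obtain a b c d where h1: "a \<in> Ocal" "b \<in> Ocal" "c \<in> Ocal" "d \<in> Ocal" "M = I0f a b c d"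
    by (rule inI0_E)
  have e: "p = s * (1 + fls_X * a)" "q = s * b" "1 = s * (1 + fls_X * d)"
    using s(2) h1(5) by (simp_all add: I0f_def m2smult_def)
  have sd: "s = inverse (1 + fls_X * d)" using e(3) U1_nz[OF h1(4)]
    by (metis inverse_unique mult.commute)
  have dO: "1 + fls_X * d \<in> Ocal" "(1 + fls_X * d) $$ 0 = 1" using h1(4) U1_nth0 by simp_all
  have sO: "s \<in> Ocal" "s $$ 0 = 1" unfolding sd using inv_U1[OF dO] by simp_all
  show "p \<in> Ocal" "q \<in> Ocal" unfolding e(1,2) using sO h1 by simp_all
  show "p $$ 0 = 1" unfolding e(1) using mult_nth0[OF sO(1), of "1 + fls_X * a"] sO h1(1) U1_nth0[OF h1(1)]
    by simp
qed



lemma Xpow_intpow: "(fls_X ^ k :: 'a::field fls) = fls_X_intpow (int k)"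
  by (simp add: fls_X_power_conv_shift_1)

lemma intpow_mult: "(fls_X_intpow i :: 'a::field fls) * fls_X_intpow j = fls_X_intpow (i + j)"
  by (rule fls_X_intpow_times_fls_X_intpow)

lemma intpow_0: "(fls_X_intpow 0 :: 'a::field fls) = 1" by simp

lemma const_intpow_nth: "(fls_const c * fls_X_intpow n :: 'a::field fls) $$ i = (if i = n then c else 0)"
  by simp

lemma shift1_times_nth[simp]: "(fls_shift m 1 * (x :: 'a::field fls)) $$ n = x $$ (n + m)"
  using fls_X_intpow_times_conv_shift(1)[of "-m" x] by simp

lemma Ocal_intpow_mult_nth: "x \<in> Ocal \<Longrightarrow> i < L \<Longrightarrow> (fls_X_intpow L * x :: 'a::field fls) $$ i = 0"
  by (simp add: intpow_times_nth Ocal_iff)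

lemma support_Ocal: assumes "\<forall>i. (\<beta>::'a::field fls) $$ i \<noteq> 0 \<longrightarrow> L \<le> i"
  shows "fls_X_intpow (-L) * \<beta> \<in> Ocal" "\<beta> = fls_X_intpow L * (fls_X_intpow (-L) * \<beta>)"
proof -
  show "fls_X_intpow (-L) * \<beta> \<in> Ocal" using assms by (auto simp: Ocal_iff intpow_times_nth)
  have "fls_X_intpow L * (fls_X_intpow (-L) * \<beta>) = fls_X_intpow (L + - L) * \<beta>"
    by (simp only: mult.assoc[symmetric] intpow_mult)
  then show "\<beta> = fls_X_intpow L * (fls_X_intpow (-L) * \<beta>)" by simp
qed

lemma Ocal_nth0_nz: "(x :: 'a::field fls) $$ 0 \<noteq> 0 \<Longrightarrow> x \<noteq> 0" by auto

lemma Ucal_iff: "z \<in> Ucal k \<longleftrightarrow> (\<exists>y\<in>Ocal. z = 1 + fls_X ^ k * y)"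
  unfolding Ucal_def by blast

lemma Ucal_1: "1 \<in> Ucal k"
  unfolding Ucal_iff by (rule bexI[of _ 0]) simp_all

lemma Ucal_U1: assumes "k \<ge> 1" "z \<in> Ucal k" shows "z \<in> Ocal" "z $$ 0 = 1"
proof -
  obtain y where y: "y \<in> Ocal" "z = 1 + fls_X ^ k * y" using assms(2) unfolding Ucal_iff by blast
  show "z \<in> Ocal" using y by simp
  have "(fls_X ^ k * y) $$ 0 = y $$ (0 - int k)" by (simp add: Xpow_intpow intpow_times_nth)
  also have "\<dots> = 0" using y(1) assms(1) by (simp add: Ocal_iff)
  finally show "z $$ 0 = 1" using y by simp
qed

lemma Ucal_mult: assumes "z \<in> Ucal k" "z' \<in> Ucal k" shows "z * z' \<in> Ucal k"
proof -
  obtain y where y: "y \<in> Ocal" "z = 1 + fls_X ^ k * y" using assms(1) unfolding Ucal_iff by blast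
  obtain y' where y': "y' \<in> Ocal" "z' = 1 + fls_X ^ k * y'" using assms(2) unfolding Ucal_iff by blast
  have "z * z' = 1 + fls_X ^ k * (y + y' + fls_X ^ k * y * y')" unfolding y y' by (simp add: algebra_simps)
  then show ?thesis unfolding Ucal_iff using y y' by (intro bexI[of _ "y + y' + fls_X ^ k * y * y'"]) simp_all
qed

lemma Ucal_inv: assumes "k \<ge> 1" "z \<in> Ucal k" shows "inverse z \<in> Ucal k"
proof -
  obtain y where y: "y \<in> Ocal" "z = 1 + fls_X ^ k * y" using assms(2) unfolding Ucal_iff by blast
  have zO: "z \<in> Ocal" "z $$ 0 = 1" using Ucal_U1[OF assms] by simp_all
  then have z0: "z \<noteq> 0" by auto
  have iO: "inverse z \<in> Ocal" using inv_U1[OF zO] by simp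
  have "inverse z = inverse z * (z - fls_X ^ k * y) " using y by simp
  also have "\<dots> = 1 + fls_X ^ k * (- y * inverse z)" using z0 by (simp add: algebra_simps)
  finally show ?thesis unfolding Ucal_iff using y iO by (intro bexI[of _ "- y * inverse z"]) simp_all
qed

lemma dg_mult: "dg z \<otimes>\<^bsub>PGL2\<^esub> dg z' = dg (z * z')"
  by (simp add: dg_def PGL_mult m2mul_def)

lemma dg_1: "dg 1 = \<one>\<^bsub>PGL2\<^esub>"
  by (simp add: dg_def PGL_one)

lemma dg_carrier: "z \<noteq> 0 \<Longrightarrow> dg z \<in> carrier PGL2"
  unfolding dg_def by (rule pcls_carrier) (simp add: m2det_def)

lemma dg_inv: "z \<noteq> 0 \<Longrightarrow> inv\<^bsub>PGL2\<^esub> (dg z) = dg (inverse (z :: 'a::field fls))"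
  by (rule G.inv_equality) (simp_all add: dg_mult dg_1 dg_carrier)

lemma I0_Agrp: "a \<in> Ocal \<Longrightarrow> b \<in> Ocal \<Longrightarrow> c \<in> Ocal \<Longrightarrow> d \<in> Ocal \<Longrightarrow> pcls (I0f a b c d) \<in> Agrp"
  unfolding Agrp_def I0_eq by (rule generate.incl) (blast intro: inI0_intro)

lemma sigma_Agrp: "sigma \<in> Agrp"
  unfolding Agrp_def by (rule generate.incl) simp

lemma one_Agrp: "\<one>\<^bsub>PGL2\<^esub> \<in> Agrp"
  unfolding Agrp_def by (rule generate.one)

lemma Agrp_mult: "a \<in> Agrp \<Longrightarrow> b \<in> Agrp \<Longrightarrow> a \<otimes>\<^bsub>PGL2\<^esub> b \<in> Agrp"
  using subgroup.m_closed[OF Agrp_subgroup] by blast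

lemma Agrp_inv: "a \<in> Agrp \<Longrightarrow> inv\<^bsub>PGL2\<^esub> a \<in> Agrp"
  using subgroup.m_inv_closed[OF Agrp_subgroup] by blast

lemma Agrp_carrier: "a \<in> Agrp \<Longrightarrow> a \<in> carrier PGL2"
  using subgroup.subset[OF Agrp_subgroup] by blast

lemma upper_Agrp: "w \<in> Ocal \<Longrightarrow> w $$ 0 = 1 \<Longrightarrow> b \<in> Ocal \<Longrightarrow> pcls (w, b, 0, 1) \<in> Agrp"
proof -
  assume "w \<in> Ocal" "w $$ 0 = 1" "b \<in> Ocal"
  then obtain a where a: "a \<in> Ocal" "w = 1 + fls_X * a" using U1_char by blast
  have "pcls (I0f a b 0 0) \<in> Agrp" using a \<open>b \<in> Ocal\<close> by (intro I0_Agrp) simp_all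
  then show ?thesis using a by (simp add: I0f_def)
qed

lemma lower_Agrp: "c \<in> Ocal \<Longrightarrow> pcls (1, 0, fls_X * c, 1) \<in> Agrp"
  using I0_Agrp[of 0 0 c 0] by (simp add: I0f_def)

lemma sig_Agrp: "c \<in> Ocal \<Longrightarrow> pcls (fls_X * c, 1, fls_X, 0) \<in> Agrp"
proof -
  assume c: "c \<in> Ocal"
  have "sigma \<otimes>\<^bsub>PGL2\<^esub> pcls (1, 0, fls_X * c, 1) \<in> Agrp"
    using Agrp_mult sigma_Agrp lower_Agrp[OF c] by blast
  moreover have "sigma \<otimes>\<^bsub>PGL2\<^esub> pcls (1, 0, fls_X * c, 1) = pcls (fls_X * c, 1, fls_X, 0)"
    by (simp add: sigma_def PGL_mult m2mul_def)
  ultimately show ?thesis by simp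
qed

lemma orbit_mem: "z \<in> Ucal k \<Longrightarrow> a \<in> Agrp \<Longrightarrow> dg z \<otimes>\<^bsub>PGL2\<^esub> g \<otimes>\<^bsub>PGL2\<^esub> a \<in> orbitk k g"
  unfolding orbitk_def by blast

lemma tri_norm: "S \<noteq> 0 \<Longrightarrow> pcls (P, Q, 0, S) = pcls (P / S, Q / S, 0, 1 :: 'a::field)"
proof -
  assume S: "S \<noteq> 0"
  have "(P / S, Q / S, 0, 1 :: 'a) = m2smult (inverse S) (P, Q, 0, S)"
    using S by (simp add: m2smult_def field_simps)
  then show ?thesis using pcls_smult[of "inverse S" "(P, Q, 0, S)"] S by simp
qed



lemma step1_gen:
  assumes "m2det M \<noteq> 0" "m2det N \<noteq> 0" "pcls N \<in> Agrp" "m2mul M N = (P, Q, 0, S)"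
  shows "\<exists>a\<in>Agrp. \<exists>x y. x \<noteq> 0 \<and> pcls M \<otimes>\<^bsub>PGL2\<^esub> a = pcls (x, y, 0, 1 :: 'a::field fls)"
proof -
  have "m2det (P, Q, 0, S) = m2det M * m2det N" using m2det_mul[of M N] assms(4) by simp
  then have "m2det (P, Q, 0, S) \<noteq> 0" using assms(1,2) by simp
  then have PS: "P \<noteq> 0" "S \<noteq> 0" by (auto simp: m2det_def)
  have "pcls M \<otimes>\<^bsub>PGL2\<^esub> pcls N = pcls (P, Q, 0, S)"
    using assms(4) by (simp add: PGL_mult)
  also have "\<dots> = pcls (P / S, Q / S, 0, 1)" using PS(2) by (rule tri_norm)
  finally have "pcls M \<otimes>\<^bsub>PGL2\<^esub> pcls N = pcls (P / S, Q / S, 0, 1)" .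
  moreover have "P / S \<noteq> 0" using PS by simp
  ultimately show ?thesis using assms(3) by blast
qed

lemma step1:
  assumes "g \<in> carrier (PGL2 :: 'a::field fls mat2 set monoid)"
  shows "\<exists>a\<in>Agrp. \<exists>x y. x \<noteq> 0 \<and> g \<otimes>\<^bsub>PGL2\<^esub> a = pcls (x, y, 0, 1)"
proof -
  obtain M where M: "g = pcls M" "m2det M \<noteq> 0" using assms unfolding PGL_carrier by blast
  obtain p q r s where pqrs: "M = (p, q, r, s)" by (cases M) blast
  show ?thesis
  proof (cases "r = 0")
    case True
    have h: "pcls (1, 0, 0, 1) \<in> Agrp" using one_Agrp by (simp add: PGL_one)
    show ?thesis unfolding M(1)
      by (rule step1_gen[OF M(2), of "(1,0,0,1)"]) (simp_all add: m2det_def pqrs True h)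
  next
    case rnz: False
    show ?thesis
    proof (cases "s \<noteq> 0 \<and> fls_subdegree s < fls_subdegree r")
      case True
      define c where "c = - (r / (s * fls_X))"
      have "fls_subdegree (r / (s * fls_X)) = fls_subdegree r - (fls_subdegree s + 1)"
        using True rnz by (simp add: fls_divide_subdegree)
      then have cO: "c \<in> Ocal" unfolding c_def Ocal_subdeg using True by simp
      have e: "r + s * (fls_X * c) = 0" using True unfolding c_def by (simp add: field_simps)
      show ?thesis unfolding M(1)
        by (rule step1_gen[OF M(2), of "(1, 0, fls_X * c, 1)"])
           (simp_all add: m2det_def pqrs lower_Agrp[OF cO] m2mul_def e)
    next
      case False
      define c where "c = - (s / r)"
      have cO: "c \<in> Ocal"
      proof (cases "s = 0")
        case True then show ?thesis by (simp add: c_def)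
      next
        case snz: False
        then have "fls_subdegree (s / r) = fls_subdegree s - fls_subdegree r"
          using rnz by (simp add: fls_divide_subdegree)
        then show ?thesis unfolding c_def Ocal_subdeg using False snz by simp
      qed
      have e: "r * (fls_X * c) + s * fls_X = 0" using rnz unfolding c_def by (simp add: field_simps)
      show ?thesis unfolding M(1)
        by (rule step1_gen[OF M(2), of "(fls_X * c, 1, fls_X, 0)"])
           (simp_all add: m2det_def pqrs sig_Agrp[OF cO] m2mul_def e)
    qed
  qed
qed

lemma step2:
  assumes x: "(x :: 'a::field fls) \<noteq> 0"
  shows "\<exists>a\<in>Agrp. \<exists>c n y'. c \<noteq> 0 \<and> (\<forall>i\<ge>n. y' $$ i = 0) \<and>
           pcls (x, y, 0, 1) \<otimes>\<^bsub>PGL2\<^esub> a = pcls (fls_const c * fls_X_intpow n, y', 0, 1)"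
proof -
  define n where "n = fls_subdegree x"
  define c where "c = x $$ n"
  have c0: "c \<noteq> 0" using x unfolding c_def n_def by simp
  define u where "u = fls_const (inverse c) * (fls_X_intpow (-n) * x)"
  have unth: "u $$ j = inverse c * x $$ (j + n)" for j unfolding u_def by simp
  have uO: "u \<in> Ocal" unfolding Ocal_iff unth n_def by simp
  have u0: "u $$ 0 = 1" unfolding unth using c0 by (simp add: c_def)
  define C where "C = fls_const c * fls_X_intpow n"
  have "u * C = (fls_const (inverse c) * fls_const c) * (fls_X_intpow (-n) * fls_X_intpow n) * x"
    unfolding u_def C_def by (simp only: mult_ac)
  also have "\<dots> = x" using c0 by (simp only: fls_const_mult_const intpow_mult) simp
  finally have uC: "u * C = x" .
  have unz: "u \<noteq> 0" using u0 by auto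
  define w where "w = inverse u"
  have wO: "w \<in> Ocal" "w $$ 0 = 1" unfolding w_def using inv_U1[OF uO u0] by simp_all
  have xw: "x * w = C" unfolding w_def uC[symmetric] using unz by simp
  define Y where "Y = fls_X_intpow (-n) * y"
  define R where "R = fps_to_fls (fls_regpart Y)"
  have RO: "R \<in> Ocal" unfolding R_def Ocal_iff by simp
  define e where "e = - fls_const (inverse c) * R"
  have eO: "e \<in> Ocal" unfolding e_def using RO by simp
  have Ce: "C * e = - (fls_X_intpow n * R)"
    unfolding C_def e_def using c0
    by (simp add: mult_ac fls_const_mult_const[symmetric] del: fls_const_mult_const)
      (simp add: fls_const_mult_const)
  define y' where "y' = C * e + y"
  have y'0: "\<forall>i\<ge>n. y' $$ i = 0"
  proof (intro allI impI)
    fix i assume "n \<le> i"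
    then have "R $$ (i - n) = y $$ i" unfolding R_def Y_def by simp
    then show "y' $$ i = 0" unfolding y'_def Ce by simp
  qed
  have a1: "pcls (w, 0, 0, 1) \<in> Agrp" using wO by (intro upper_Agrp) simp_all
  have a2: "pcls (1, e, 0, 1) \<in> Agrp" using eO by (intro upper_Agrp) simp_all
  have "pcls (x, y, 0, 1) \<otimes>\<^bsub>PGL2\<^esub> (pcls (w, 0, 0, 1) \<otimes>\<^bsub>PGL2\<^esub> pcls (1, e, 0, 1))
        = pcls (x * w, x * w * e + y, 0, 1)"
    by (simp add: PGL_mult m2mul_def mult.assoc)
  also have "\<dots> = pcls (C, y', 0, 1)" unfolding xw y'_def ..
  finally show ?thesis using Agrp_mult[OF a1 a2] c0 y'0 unfolding C_def by blast
qed



lemma G_cancel_l: "x \<in> carrier PGL2 \<Longrightarrow> y \<in> carrier PGL2 \<Longrightarrow>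
   inv\<^bsub>PGL2\<^esub> x \<otimes>\<^bsub>PGL2\<^esub> (x \<otimes>\<^bsub>PGL2\<^esub> y) = (y :: 'a::field mat2 set)"
  by (simp add: G.m_assoc[symmetric])

lemma G_cancel_r: "x \<in> carrier PGL2 \<Longrightarrow> y \<in> carrier PGL2 \<Longrightarrow>
   x \<otimes>\<^bsub>PGL2\<^esub> (inv\<^bsub>PGL2\<^esub> x \<otimes>\<^bsub>PGL2\<^esub> y) = (y :: 'a::field mat2 set)"
  by (simp add: G.m_assoc[symmetric])

lemma Rset_E:
  assumes "r \<in> Rset k"
  obtains n c \<beta> where "r = pcls (fls_const c * fls_X_intpow n, \<beta>, 0, 1)" "c \<noteq> 0"
    "\<forall>i. \<beta> $$ i \<noteq> 0 \<longrightarrow> n - int k + 1 \<le> i \<and> i \<le> n - 1"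
  using assms unfolding Rset_def Rnk_def by blast

lemma orbit_E:
  assumes "r \<in> orbitk k g"
  obtains z a where "r = dg z \<otimes>\<^bsub>PGL2\<^esub> g \<otimes>\<^bsub>PGL2\<^esub> a" "z \<in> Ucal k" "a \<in> Agrp"
  using assms unfolding orbitk_def by blast

lemma uniq:
  assumes k: "k \<ge> 1" and g: "g \<in> carrier (PGL2 :: 'a::field fls mat2 set monoid)"
    and r1: "r1 \<in> Rset k" "r1 \<in> orbitk k g" and r2: "r2 \<in> Rset k" "r2 \<in> orbitk k g"
  shows "r1 = r2"
proof -
  obtain z1 a1 where o1: "r1 = dg z1 \<otimes>\<^bsub>PGL2\<^esub> g \<otimes>\<^bsub>PGL2\<^esub> a1" "z1 \<in> Ucal k" "a1 \<in> Agrp"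
    using r1(2) by (rule orbit_E)
  obtain z2 a2 where o2: "r2 = dg z2 \<otimes>\<^bsub>PGL2\<^esub> g \<otimes>\<^bsub>PGL2\<^esub> a2" "z2 \<in> Ucal k" "a2 \<in> Agrp"
    using r2(2) by (rule orbit_E)
  have z1nz: "z1 \<noteq> 0" using Ucal_U1[OF k o1(2)] by auto
  have z2nz: "z2 \<noteq> 0" using Ucal_U1[OF k o2(2)] by auto
  define z where "z = z2 * inverse z1"
  define a where "a = inv\<^bsub>PGL2\<^esub> a1 \<otimes>\<^bsub>PGL2\<^esub> a2"
  have zU: "z \<in> Ucal k" unfolding z_def by (intro Ucal_mult Ucal_inv k o1(2) o2(2))
  have aA: "a \<in> Agrp" unfolding a_def by (intro Agrp_mult Agrp_inv o1(3) o2(3))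
  have c: "dg z1 \<in> carrier PGL2" "dg z2 \<in> carrier PGL2" "a1 \<in> carrier PGL2" "a2 \<in> carrier PGL2"
    using dg_carrier z1nz z2nz Agrp_carrier o1(3) o2(3) by auto
  have dz: "dg z = dg z2 \<otimes>\<^bsub>PGL2\<^esub> inv\<^bsub>PGL2\<^esub> (dg z1)"
    unfolding z_def using z1nz by (simp add: dg_inv dg_mult)
  have "dg z \<otimes>\<^bsub>PGL2\<^esub> r1 \<otimes>\<^bsub>PGL2\<^esub> a =
        dg z2 \<otimes>\<^bsub>PGL2\<^esub> (inv\<^bsub>PGL2\<^esub> (dg z1) \<otimes>\<^bsub>PGL2\<^esub> (dg z1 \<otimes>\<^bsub>PGL2\<^esub> (g \<otimes>\<^bsub>PGL2\<^esub>
          (a1 \<otimes>\<^bsub>PGL2\<^esub> (inv\<^bsub>PGL2\<^esub> a1 \<otimes>\<^bsub>PGL2\<^esub> a2)))))"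
    unfolding dz o1(1) a_def using c g by (simp add: G.m_assoc)
  also have "\<dots> = r2" unfolding o2(1) using c g by (simp add: G_cancel_l G_cancel_r G.m_assoc)
  finally have r2eq: "r2 = dg z \<otimes>\<^bsub>PGL2\<^esub> r1 \<otimes>\<^bsub>PGL2\<^esub> a" by simp
  obtain M where M: "a = pcls M" using Agrp_carrier[OF aA] unfolding PGL_carrier by blast
  obtain m1 m2 m3 m4 where m: "M = (m1, m2, m3, m4)" by (cases M) blast
  obtain n1 c1 \<beta>1 where R1: "r1 = pcls (fls_const c1 * fls_X_intpow n1, \<beta>1, 0, 1)" "c1 \<noteq> 0"
    "\<forall>i. \<beta>1 $$ i \<noteq> 0 \<longrightarrow> n1 - int k + 1 \<le> i \<and> i \<le> n1 - 1" using r1(1) by (rule Rset_E)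
  obtain n2 c2 \<beta>2 where R2: "r2 = pcls (fls_const c2 * fls_X_intpow n2, \<beta>2, 0, 1)" "c2 \<noteq> 0"
    "\<forall>i. \<beta>2 $$ i \<noteq> 0 \<longrightarrow> n2 - int k + 1 \<le> i \<and> i \<le> n2 - 1" using r2(1) by (rule Rset_E)
  define C1 where "C1 = fls_const c1 * fls_X_intpow n1"
  define C2 where "C2 = fls_const c2 * fls_X_intpow n2"
  have "pcls (C2, \<beta>2, 0, 1) = pcls (z * C1 * m1 + z * \<beta>1 * m3, z * C1 * m2 + z * \<beta>1 * m4, m3, m4)"
    using r2eq unfolding R1(1) R2(1) M m dg_def PGL_mult C1_def C2_def by (simp add: m2mul_def)
  then obtain s where s: "s \<noteq> 0" "(C2, \<beta>2, 0, 1) = m2smult s (z * C1 * m1 + z * \<beta>1 * m3, z * C1 * m2 + z * \<beta>1 * m4, m3, m4)"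
    using pcls_eqD by metis
  then have e: "C2 = s * (z * C1 * m1 + z * \<beta>1 * m3)" "\<beta>2 = s * (z * C1 * m2 + z * \<beta>1 * m4)"
    "0 = s * m3" "1 = s * m4" by (simp_all add: m2smult_def)
  have m3: "m3 = 0" using e(3) s(1) by simp
  have "m2smult s M = (s * m1, s * m2, 0, 1)" unfolding m m2smult_def using m3 e(4) by simp
  then have "a = pcls (s * m1, s * m2, 0, 1)" unfolding M using pcls_smult[OF s(1), of M] by simp
  note U = Agrp_upper[OF aA this]
  have zO: "z \<in> Ocal" "z $$ 0 = 1" using Ucal_U1[OF k zU] by simp_all
  define u where "u = z * (s * m1)"
  have uO: "u \<in> Ocal" unfolding u_def using zO U by simp
  have u0: "u $$ 0 = 1" unfolding u_def using mult_nth0[OF zO(1) U(1)] zO U by simp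
  have C2u: "C2 = fls_const c1 * (fls_X_intpow n1 * u)"
    unfolding e(1) m3 u_def C1_def by (simp add: mult_ac)
  have "C2 $$ n1 = c1" unfolding C2u by (simp add: u0)
  then have nc: "n1 = n2" "c1 = c2" unfolding C2_def using R1(2) by (simp_all split: if_splits)
  have b2: "\<beta>2 = z * C1 * (s * m2) + z * \<beta>1"
    unfolding e(2) using e(4) by (simp add: algebra_simps)
  obtain y where y: "y \<in> Ocal" "z = 1 + fls_X ^ k * y" using zU unfolding Ucal_iff by blast
  define L where "L = n1 - int k + 1"
  have supp: "\<forall>i. \<beta>1 $$ i \<noteq> 0 \<longrightarrow> L \<le> i" using R1(3) unfolding L_def by blast
  define B where "B = fls_X_intpow (-L) * \<beta>1"
  have BO: "B \<in> Ocal" and b1: "\<beta>1 = fls_X_intpow L * B" unfolding B_def using support_Ocal[OF supp] by simp_all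
  have diff: "\<beta>2 - \<beta>1 = fls_X_intpow n1 * (fls_const c1 * z * (s * m2)) + fls_X_intpow (n1 + 1) * (y * B)"
  proof -
    have "\<beta>2 - \<beta>1 = z * C1 * (s * m2) + (z - 1) * \<beta>1" unfolding b2 by (simp add: algebra_simps)
    also have "(z - 1) * \<beta>1 = (fls_X_intpow (int k) * fls_X_intpow L) * (y * B)"
      unfolding y(2) b1 Xpow_intpow by (simp add: mult_ac)
    also have "fls_X_intpow (int k) * fls_X_intpow L = (fls_X_intpow (n1 + 1) :: 'a fls)"
      unfolding intpow_mult L_def by simp
    finally show ?thesis unfolding C1_def by (simp add: mult_ac)
  qed
  have "\<beta>1 = \<beta>2"
  proof (rule fls_eqI)
    fix i
    show "\<beta>1 $$ i = \<beta>2 $$ i"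
    proof (cases "i < n1")
      case True
      have o1: "fls_const c1 * z * (s * m2) \<in> Ocal" using zO U by simp
      have o2: "y * B \<in> Ocal" using y BO by simp
      have "(\<beta>2 - \<beta>1) $$ i = (fls_X_intpow n1 * (fls_const c1 * z * (s * m2))) $$ i
            + (fls_X_intpow (n1 + 1) * (y * B)) $$ i" unfolding diff by (rule fls_plus_nth)
      also have "\<dots> = 0" using Ocal_intpow_mult_nth[OF o1, of i n1] Ocal_intpow_mult_nth[OF o2, of i "n1+1"] True
        by simp
      finally have "(\<beta>2 - \<beta>1) $$ i = 0" .
      then show ?thesis by simp
    next
      case False
      then show ?thesis using R1(3) R2(3) nc by force
    qed
  qed
  then show ?thesis unfolding R1(1) R2(1) nc by simp
qed



theorem mainTheorem3:
  fixes k :: nat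
    and \<psi> :: "'a::{field, finite} \<Rightarrow> complex"
    and \<chi> :: "'a fls mat2 set \<Rightarrow> complex"
  assumes k: "k \<ge> 1"
    and psi_add: "\<forall>x y. \<psi> (x + y) = \<psi> x * \<psi> y"
    and psi_nz: "\<forall>x. \<psi> x \<noteq> 0"
    and psi_nontriv: "\<exists>x. \<psi> x \<noteq> 1"
    and chi_nz: "\<forall>a \<in> Agrp. \<chi> a \<noteq> 0"
    and chi_hom: "\<forall>a \<in> Agrp. \<forall>b \<in> Agrp. \<chi> (a \<otimes>\<^bsub>PGL2\<^esub> b) = \<chi> a * \<chi> b"
    and chi_I0: "\<forall>a \<in> Ocal. \<forall>b \<in> Ocal. \<forall>c \<in> Ocal. \<forall>d \<in> Ocal.
        \<chi> (pcls (1 + fls_X * a, b, fls_X * c, 1 + fls_X * d)) = \<psi> (fls_nth b 0 + fls_nth c 0)"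
    and chi_sigma: "\<chi> sigma = 1"
  shows "\<forall>Orb. relevant k \<chi> Orb \<longrightarrow> (\<exists>!r. r \<in> Rset k \<and> r \<in> Orb)"
proof (intro allI impI)
  fix Orb assume rel: "relevant k \<chi> Orb"
  obtain g where g: "g \<in> carrier PGL2" "Orb = orbitk k g" using rel unfolding relevant_def by blast
  obtain f :: "'a fls mat2 set \<Rightarrow> complex" and xnz where f: "xnz \<in> Orb" "f xnz \<noteq> 0"
    "\<forall>z \<in> Ucal k. \<forall>a \<in> Agrp. \<forall>x \<in> Orb. f (dg z \<otimes>\<^bsub>PGL2\<^esub> x \<otimes>\<^bsub>PGL2\<^esub> a) = \<chi> a * f x"
    using rel unfolding relevant_def by blast
  have gOrb: "g \<in> Orb"
  proof -
    have "g = dg 1 \<otimes>\<^bsub>PGL2\<^esub> g \<otimes>\<^bsub>PGL2\<^esub> \<one>\<^bsub>PGL2\<^esub>" using g(1) by (simp add: dg_1)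
    then show ?thesis unfolding g(2) using orbit_mem[OF Ucal_1 one_Agrp] by metis
  qed
  obtain a0 x y where a0: "a0 \<in> Agrp" "x \<noteq> 0" "g \<otimes>\<^bsub>PGL2\<^esub> a0 = pcls (x, y, 0, 1)"
    using step1[OF g(1)] by blast
  obtain a1 c n y' where a1: "a1 \<in> Agrp" "c \<noteq> 0" "\<forall>i\<ge>n. y' $$ i = 0"
    "pcls (x, y, 0, 1) \<otimes>\<^bsub>PGL2\<^esub> a1 = pcls (fls_const c * fls_X_intpow n, y', 0, 1)"
    using step2[OF a0(2), of y] by blast
  define C where "C = fls_const c * fls_X_intpow n"
  define g' where "g' = pcls (C, y', 0, 1)"
  define atot where "atot = a0 \<otimes>\<^bsub>PGL2\<^esub> a1"
  have atA: "atot \<in> Agrp" unfolding atot_def using a0(1) a1(1) by (rule Agrp_mult)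
  have g'eq: "g' = g \<otimes>\<^bsub>PGL2\<^esub> atot"
  proof -
    have "g \<otimes>\<^bsub>PGL2\<^esub> atot = (g \<otimes>\<^bsub>PGL2\<^esub> a0) \<otimes>\<^bsub>PGL2\<^esub> a1"
      unfolding atot_def by (rule G.m_assoc[symmetric]) (use g(1) Agrp_carrier[OF a0(1)] Agrp_carrier[OF a1(1)] in auto)
    also have "\<dots> = pcls (x, y, 0, 1) \<otimes>\<^bsub>PGL2\<^esub> a1" by (simp only: a0(3))
    also have "\<dots> = g'" unfolding g'_def C_def by (rule a1(4))
    finally show ?thesis by simp
  qed
  have g'eq2: "g' = dg 1 \<otimes>\<^bsub>PGL2\<^esub> g \<otimes>\<^bsub>PGL2\<^esub> atot" unfolding g'eq dg_1 using g(1) by simp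
  have g'Orb: "g' \<in> Orb" unfolding g(2) g'eq2 by (rule orbit_mem[OF Ucal_1 atA])
  have ex: "\<exists>r. r \<in> Rset k \<and> r \<in> Orb"
  proof (cases "\<forall>i. y' $$ i \<noteq> 0 \<longrightarrow> n - int k + 1 \<le> i \<and> i \<le> n - 1")
    case True
    have "g' \<in> Rset k" unfolding g'_def C_def Rset_def Rnk_def using True a1(2) by blast
    then show ?thesis using g'Orb by blast
  next
    case False
    then obtain i where i: "y' $$ i \<noteq> 0" "\<not> (n - int k + 1 \<le> i \<and> i \<le> n - 1)" by blast
    have "i < n" using i(1) a1(3) by (metis not_less)
    then have ile: "i \<le> n - int k" using i(2) by linarith
    define m where "m = fls_subdegree y'"
    have mi: "m \<le> i" unfolding m_def using i(1) by (rule fls_subdegree_leI)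
    have y'nz: "y' \<noteq> 0" using i(1) by auto
    define ym where "ym = y' $$ m"
    have ym: "ym \<noteq> 0" unfolding ym_def m_def using y'nz by simp
    obtain t0 where t0: "\<psi> t0 \<noteq> 1" using psi_nontriv by blast
    define lam where "lam = c * t0 / ym"
    define v where "v = fls_const lam * fls_X_intpow (n - int k - m)"
    have vO: "v \<in> Ocal" unfolding v_def
      by (rule Ocal_mult[OF Ocal_const Ocal_intpow]) (use mi ile in simp)
    define w where "w = 1 + fls_X ^ k * v"
    have wU: "w \<in> Ucal k" unfolding w_def Ucal_iff using vO by blast
    have wO: "w \<in> Ocal" "w $$ 0 = 1" using Ucal_U1[OF k wU] by simp_all
    have wnz: "w \<noteq> 0" using wO by auto
    define z where "z = inverse w"
    have zU: "z \<in> Ucal k" unfolding z_def by (rule Ucal_inv[OF k wU])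
    have supp: "\<forall>j. y' $$ j \<noteq> 0 \<longrightarrow> m \<le> j" unfolding m_def using fls_subdegree_leI by blast
    define b where "b = fls_const (lam / c) * (fls_X_intpow (-m) * y')"
    have bO: "b \<in> Ocal" unfolding b_def using support_Ocal(1)[OF supp] by simp
    have b0: "b $$ 0 = t0" unfolding b_def lam_def using a1(2) ym by (simp add: ym_def)
    have Cb: "C * b = (w - 1) * y'"
    proof -
      have "C * b = fls_const (c * (lam / c)) * (fls_X_intpow n * fls_X_intpow (-m)) * y'"
        unfolding C_def b_def by (simp only: mult_ac fls_const_mult_const[symmetric])
      also have "\<dots> = fls_const lam * fls_X_intpow (n - m) * y'"
        using a1(2) by (simp only: intpow_mult) simp
      finally have h1: "C * b = fls_const lam * fls_X_intpow (n - m) * y'" .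
      have "(w - 1) * y' = fls_const lam * (fls_X_intpow (int k) * fls_X_intpow (n - int k - m)) * y'"
        unfolding w_def v_def Xpow_intpow by (simp add: mult_ac)
      then have h2: "(w - 1) * y' = fls_const lam * fls_X_intpow (n - m) * y'"
        by (simp only: intpow_mult) simp
      show ?thesis using h1 h2 by (rule trans[OF _ sym])
    qed
    define A where "A = fls_X ^ (k - 1) * v"
    have AO: "A \<in> Ocal" unfolding A_def using vO by simp
    define a where "a = pcls (1 + fls_X * A, b, fls_X * 0, 1 + fls_X * 0)"
    have XA: "fls_X * A = fls_X ^ k * v" unfolding A_def using k
      by (cases k) (simp_all add: mult.assoc)
    have aw: "a = pcls (w, b, 0, 1)" unfolding a_def XA w_def by simp
    have aA: "a \<in> Agrp" unfolding aw using wO bO by (intro upper_Agrp)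
    have "\<chi> a = \<psi> (b $$ 0 + (0::'a fls) $$ 0)" unfolding a_def using chi_I0 AO bO Ocal_0 by blast
    then have chia: "\<chi> a = \<psi> t0" using b0 by simp
    have zw: "z * w = 1" unfolding z_def using wnz by simp
    have fixg: "dg z \<otimes>\<^bsub>PGL2\<^esub> g' \<otimes>\<^bsub>PGL2\<^esub> a = g'"
    proof -
      have "dg z \<otimes>\<^bsub>PGL2\<^esub> g' \<otimes>\<^bsub>PGL2\<^esub> a = pcls ((z * w) * C, z * (C * b) + z * y', 0, 1)"
        unfolding dg_def g'_def aw by (simp add: PGL_mult m2mul_def mult_ac)
      also have "z * (C * b) + z * y' = (z * w) * y'" unfolding Cb by (simp add: algebra_simps)
      finally show ?thesis unfolding zw g'_def by simp
    qed
    have "f (dg z \<otimes>\<^bsub>PGL2\<^esub> g' \<otimes>\<^bsub>PGL2\<^esub> a) = \<chi> a * f g'"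
      using f(3) zU aA g'Orb by blast
    then have "\<chi> a * f g' = f g'" unfolding fixg by simp
    then have "f g' = 0 \<or> \<chi> a = 1" by (simp only: mult_cancel_right2)
    then have fg'0: "f g' = 0" using chia t0 by simp
    have "f g' = \<chi> atot * f g" unfolding g'eq2 using f(3) Ucal_1 atA gOrb by blast
    then have fg0: "f g = 0" using fg'0 chi_nz atA by simp
    obtain z1 a1' where o: "xnz = dg z1 \<otimes>\<^bsub>PGL2\<^esub> g \<otimes>\<^bsub>PGL2\<^esub> a1'" "z1 \<in> Ucal k" "a1' \<in> Agrp"
      using f(1) unfolding g(2) by (rule orbit_E)
    have "f xnz = \<chi> a1' * f g" unfolding o(1) using f(3) o(2,3) gOrb by blast
    then have False using fg0 f(2) by simp
    then show ?thesis ..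
  qed
  then obtain r where r: "r \<in> Rset k" "r \<in> Orb" by blast
  show "\<exists>!r. r \<in> Rset k \<and> r \<in> Orb"
  proof (rule ex1I[of _ r])
    show "r \<in> Rset k \<and> r \<in> Orb" using r by blast
  next
    fix r' assume "r' \<in> Rset k \<and> r' \<in> Orb"
    then show "r' = r" using uniq[OF k g(1)] r unfolding g(2) by blast
  qed
qed

end
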